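(* Let $P$ satisfy (S1)–(S4). If $\bar h\in H$ has support of size at least $4$, then $\bar h$ is a $[\pm,t]$-commutator.
   Context: Conditions on a finite group $P$: (S1) for all $a_1,a_2\in P$ there are $x,y$ with $a_2=x^{-1}a_1^{-1}yxy^{-1}$; (S2) for all $a_1,a_2,a_3$ there are $u,v$ with $a_2=a_3ua_1^{-1}a_3^{-1}vu^{-1}v^{-1}$; (S3) for all $u_1,u_2,u_3,u_4\ne1$ there are $x,y,z$ with $u_4=x^{-1}u_1xy^{-1}u_2yz^{-1}u_3z$; (S4) there are $u_1,u_2,u_3\ne1$ such that there are no $x,y$ with $u_3=x^{-1}u_2^{-1}xy^{-1}u_1^{-1}y$. $H=\bigoplus_{i\in\mathbb Z}H_i$, each $H_i$ a copy of $P$, elements finitely supported sequences $(h_i)_{i\in\mathbb Z}$; the support of $\bar h$ is $\{i:h_i\ne1\}$. $\alpha((h_i)_i)=(h_{i+1})_i$. $\bar h\in H$ is a $[\pm,t]$-commutator if $\bar h=\bar g_1\alpha(\bar g_1^{-1})\alpha(\bar g_2)\bar g_2^{-1}$ or $\bar h=\alpha(\bar g_1)\bar g_1^{-1}\bar g_2\alpha(\bar g_2^{-1})$ for some $\bar g_1,\bar g_2\in H$. *)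

theory Defs
  imports "HOL-Algebra.Group"
begin

definition S1 :: "('a, 'b) monoid_scheme \<Rightarrow> bool" where
  "S1 G \<longleftrightarrow> (\<forall>a1\<in>carrier G. \<forall>a2\<in>carrier G. \<exists>x\<in>carrier G. \<exists>y\<in>carrier G.
     a2 = inv\<^bsub>G\<^esub> x \<otimes>\<^bsub>G\<^esub> inv\<^bsub>G\<^esub> a1 \<otimes>\<^bsub>G\<^esub> y \<otimes>\<^bsub>G\<^esub> x \<otimes>\<^bsub>G\<^esub> inv\<^bsub>G\<^esub> y)"

definition S2 :: "('a, 'b) monoid_scheme \<Rightarrow> bool" where
  "S2 G \<longleftrightarrow> (\<forall>a1\<in>carrier G. \<forall>a2\<in>carrier G. \<forall>a3\<in>carrier G. \<exists>u\<in>carrier G. \<exists>v\<in>carrier G.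
     a2 = a3 \<otimes>\<^bsub>G\<^esub> u \<otimes>\<^bsub>G\<^esub> inv\<^bsub>G\<^esub> a1 \<otimes>\<^bsub>G\<^esub> inv\<^bsub>G\<^esub> a3 \<otimes>\<^bsub>G\<^esub> v
          \<otimes>\<^bsub>G\<^esub> inv\<^bsub>G\<^esub> u \<otimes>\<^bsub>G\<^esub> inv\<^bsub>G\<^esub> v)"

definition S3 :: "('a, 'b) monoid_scheme \<Rightarrow> bool" where
  "S3 G \<longleftrightarrow> (\<forall>u1\<in>carrier G. \<forall>u2\<in>carrier G. \<forall>u3\<in>carrier G. \<forall>u4\<in>carrier G.
     u1 \<noteq> \<one>\<^bsub>G\<^esub> \<longrightarrow> u2 \<noteq> \<one>\<^bsub>G\<^esub> \<longrightarrow> u3 \<noteq> \<one>\<^bsub>G\<^esub> \<longrightarrow> u4 \<noteq> \<one>\<^bsub>G\<^esub> \<longrightarrow>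
     (\<exists>x\<in>carrier G. \<exists>y\<in>carrier G. \<exists>z\<in>carrier G.
       u4 = inv\<^bsub>G\<^esub> x \<otimes>\<^bsub>G\<^esub> u1 \<otimes>\<^bsub>G\<^esub> x \<otimes>\<^bsub>G\<^esub> inv\<^bsub>G\<^esub> y \<otimes>\<^bsub>G\<^esub> u2 \<otimes>\<^bsub>G\<^esub> y
            \<otimes>\<^bsub>G\<^esub> inv\<^bsub>G\<^esub> z \<otimes>\<^bsub>G\<^esub> u3 \<otimes>\<^bsub>G\<^esub> z))"

definition S4 :: "('a, 'b) monoid_scheme \<Rightarrow> bool" where
  "S4 G \<longleftrightarrow> (\<exists>u1\<in>carrier G. \<exists>u2\<in>carrier G. \<exists>u3\<in>carrier G.
     u1 \<noteq> \<one>\<^bsub>G\<^esub> \<and> u2 \<noteq> \<one>\<^bsub>G\<^esub> \<and> u3 \<noteq> \<one>\<^bsub>G\<^esub> \<and>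
     \<not> (\<exists>x\<in>carrier G. \<exists>y\<in>carrier G.
       u3 = inv\<^bsub>G\<^esub> x \<otimes>\<^bsub>G\<^esub> inv\<^bsub>G\<^esub> u2 \<otimes>\<^bsub>G\<^esub> x \<otimes>\<^bsub>G\<^esub> inv\<^bsub>G\<^esub> y
            \<otimes>\<^bsub>G\<^esub> inv\<^bsub>G\<^esub> u1 \<otimes>\<^bsub>G\<^esub> y))"

text \<open>H = direct sum of copies of G indexed by the integers: finitely supported sequences.\<close>

definition suppH :: "('a, 'b) monoid_scheme \<Rightarrow> (int \<Rightarrow> 'a) \<Rightarrow> int set" where
  "suppH G h = {i. h i \<noteq> \<one>\<^bsub>G\<^esub>}"

definition Hcarrier :: "('a, 'b) monoid_scheme \<Rightarrow> (int \<Rightarrow> 'a) set" where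
  "Hcarrier G = {h. (\<forall>i. h i \<in> carrier G) \<and> finite (suppH G h)}"

definition Hmul :: "('a, 'b) monoid_scheme \<Rightarrow> (int \<Rightarrow> 'a) \<Rightarrow> (int \<Rightarrow> 'a) \<Rightarrow> (int \<Rightarrow> 'a)" where
  "Hmul G g h = (\<lambda>i. g i \<otimes>\<^bsub>G\<^esub> h i)"

definition Hinv :: "('a, 'b) monoid_scheme \<Rightarrow> (int \<Rightarrow> 'a) \<Rightarrow> (int \<Rightarrow> 'a)" where
  "Hinv G g = (\<lambda>i. inv\<^bsub>G\<^esub> (g i))"

definition shift :: "(int \<Rightarrow> 'a) \<Rightarrow> (int \<Rightarrow> 'a)" where
  "shift h = (\<lambda>i. h (i + 1))"

definition pm_t_commutator :: "('a, 'b) monoid_scheme \<Rightarrow> (int \<Rightarrow> 'a) \<Rightarrow> bool" where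
  "pm_t_commutator G h \<longleftrightarrow> (\<exists>g1\<in>Hcarrier G. \<exists>g2\<in>Hcarrier G.
     h = Hmul G (Hmul G (Hmul G g1 (shift (Hinv G g1))) (shift g2)) (Hinv G g2) \<or>
     h = Hmul G (Hmul G (Hmul G (shift g1) (Hinv G g1)) g2) (shift (Hinv G g2)))"

end

theory Submission
  imports Defs
begin

primrec CP :: "('a, 'b) monoid_scheme \<Rightarrow> 'a list \<Rightarrow> 'a set" where
  "CP G [] = {\<one>\<^bsub>G\<^esub>}"
| "CP G (v # vs) = {inv\<^bsub>G\<^esub> y \<otimes>\<^bsub>G\<^esub> v \<otimes>\<^bsub>G\<^esub> y \<otimes>\<^bsub>G\<^esub> p | y p. y \<in> carrier G \<and> p \<in> CP G vs}"

definition W :: "('a, 'b) monoid_scheme \<Rightarrow> (int \<Rightarrow> 'a) \<Rightarrow> (int \<Rightarrow> 'a) \<Rightarrow> int \<Rightarrow> 'a" where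
  "W G h x j = inv\<^bsub>G\<^esub> (x j) \<otimes>\<^bsub>G\<^esub> h j \<otimes>\<^bsub>G\<^esub> x j"

context group
begin

lemma inv_cancel_assoc: "x \<in> carrier G \<Longrightarrow> y \<in> carrier G \<Longrightarrow> inv x \<otimes> (x \<otimes> y) = y"
  by (simp add: m_assoc[symmetric])

lemma inv_cancel_assoc2: "x \<in> carrier G \<Longrightarrow> y \<in> carrier G \<Longrightarrow> x \<otimes> (inv x \<otimes> y) = y"
  by (simp add: m_assoc[symmetric])

lemma CP_carrier: "set us \<subseteq> carrier G \<Longrightarrow> CP G us \<subseteq> carrier G"
  by (induction us) auto

lemma CP_mem: "y \<in> carrier G \<Longrightarrow> p \<in> CP G vs \<Longrightarrow> inv y \<otimes> v \<otimes> y \<otimes> p \<in> CP G (v # vs)"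
  by auto

lemma noncentral:
  assumes s1: "S1 G" and s3: "S3 G" and a: "a \<in> carrier G" "a \<noteq> \<one>"
  shows "\<exists>x\<in>carrier G. inv x \<otimes> a \<otimes> x \<noteq> a"
proof (rule ccontr)
  assume "\<not> ?thesis"
  hence c: "\<And>x. x \<in> carrier G \<Longrightarrow> inv x \<otimes> a \<otimes> x = a" by auto
  have all: "\<And>u. u \<in> carrier G \<Longrightarrow> u \<noteq> \<one> \<Longrightarrow> u = a \<otimes> a \<otimes> a"
  proof -
    fix u assume u: "u \<in> carrier G" "u \<noteq> \<one>"
    obtain x y z where xyz: "x \<in> carrier G" "y \<in> carrier G" "z \<in> carrier G"
      "u = inv x \<otimes> a \<otimes> x \<otimes> inv y \<otimes> a \<otimes> y \<otimes> inv z \<otimes> a \<otimes> z"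
      using s3[unfolded S3_def, rule_format, OF a(1) a(1) a(1) u(1) a(2) a(2) a(2) u(2)] by blast
    have "u = (inv x \<otimes> a \<otimes> x) \<otimes> (inv y \<otimes> a \<otimes> y) \<otimes> (inv z \<otimes> a \<otimes> z)"
      using xyz a by (simp add: m_assoc)
    thus "u = a \<otimes> a \<otimes> a" using c[OF xyz(1)] c[OF xyz(2)] c[OF xyz(3)] by simp
  qed
  have comm: "\<And>g k. g \<in> carrier G \<Longrightarrow> k \<in> carrier G \<Longrightarrow> g \<otimes> k = k \<otimes> g"
  proof -
    fix g k assume gk: "g \<in> carrier G" "k \<in> carrier G"
    show "g \<otimes> k = k \<otimes> g"
    proof (cases "g = \<one> \<or> k = \<one>")
      case True thus ?thesis using gk by auto
    next
      case False
      hence "g = a \<otimes> a \<otimes> a" "k = a \<otimes> a \<otimes> a" using all gk by auto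
      thus ?thesis by simp
    qed
  qed
  obtain x y where xy: "x \<in> carrier G" "y \<in> carrier G"
    "a = inv x \<otimes> inv \<one> \<otimes> y \<otimes> x \<otimes> inv y"
    using s1[unfolded S1_def, rule_format, OF one_closed a(1)] by blast
  have "a = inv x \<otimes> (y \<otimes> x) \<otimes> inv y" using xy by (simp add: m_assoc)
  also have "\<dots> = inv x \<otimes> (x \<otimes> y) \<otimes> inv y" using comm[of y x] xy by simp
  also have "\<dots> = \<one>" using xy by (simp add: m_assoc[symmetric])
  finally show False using a by simp
qed

lemma CP_nonone:
  assumes s1: "S1 G" and s3: "S3 G"
  shows "set us \<subseteq> carrier G - {\<one>} \<Longrightarrow> us \<noteq> [] \<Longrightarrow> \<exists>p\<in>CP G us. p \<noteq> \<one>"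
proof (induction us)
  case Nil thus ?case by simp
next
  case (Cons u vs)
  hence u: "u \<in> carrier G" "u \<noteq> \<one>" by auto
  show ?case
  proof (cases "vs = []")
    case True
    have "inv \<one> \<otimes> u \<otimes> \<one> \<otimes> \<one> \<in> CP G (u # vs)" using True CP_mem[of \<one> \<one> vs u] by simp
    thus ?thesis using u by auto
  next
    case False
    with Cons obtain p where p: "p \<in> CP G vs" "p \<noteq> \<one>" by auto
    have pc: "p \<in> carrier G" using p CP_carrier Cons.prems by auto
    show ?thesis
    proof (cases "u \<otimes> p = \<one>")
      case False
      have "inv \<one> \<otimes> u \<otimes> \<one> \<otimes> p \<in> CP G (u # vs)" using p CP_mem[of \<one> p vs u] by simp
      thus ?thesis using False u pc by auto
    next
      case True
      hence pinv: "p = inv u" using inv_equality[of p u] inv_comm[of u p] u pc by simp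
      obtain y where y: "y \<in> carrier G" "inv y \<otimes> u \<otimes> y \<noteq> u"
        using noncentral[OF s1 s3 u] by auto
      have mem: "inv y \<otimes> u \<otimes> y \<otimes> p \<in> CP G (u # vs)" using p y CP_mem by simp
      have "inv y \<otimes> u \<otimes> y \<otimes> p \<noteq> \<one>"
      proof
        assume "inv y \<otimes> u \<otimes> y \<otimes> p = \<one>"
        hence "inv y \<otimes> u \<otimes> y \<otimes> inv u \<otimes> u = u" using u y pinv by simp
        hence "inv y \<otimes> u \<otimes> y = u" using u y by (simp add: m_assoc)
        thus False using y by simp
      qed
      thus ?thesis using mem by blast
    qed
  qed
qed

lemma CP_append:
  "set us \<subseteq> carrier G \<Longrightarrow> set ws \<subseteq> carrier G \<Longrightarrow> p \<in> CP G us \<Longrightarrow> q \<in> CP G ws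
   \<Longrightarrow> p \<otimes> q \<in> CP G (us @ ws)"
proof (induction us arbitrary: p)
  case Nil
  hence "q \<in> carrier G" using CP_carrier by blast
  thus ?case using Nil by simp
next
  case (Cons u vs)
  then obtain y p' where yp: "y \<in> carrier G" "p' \<in> CP G vs" "p = inv y \<otimes> u \<otimes> y \<otimes> p'" by auto
  have p'c: "p' \<in> carrier G" using yp Cons.prems CP_carrier by auto
  have qc: "q \<in> carrier G" using Cons.prems CP_carrier by auto
  have "p' \<otimes> q \<in> CP G (vs @ ws)" using Cons yp by auto
  moreover have "p \<otimes> q = inv y \<otimes> u \<otimes> y \<otimes> (p' \<otimes> q)" using yp p'c qc Cons.prems
    by (simp add: m_assoc)
  ultimately show ?case using yp by auto
qed

lemma CP_three:
  assumes s3: "S3 G" and us: "set us \<subseteq> carrier G - {\<one>}" "length us = 3"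
    and t: "t \<in> carrier G" "t \<noteq> \<one>"
  shows "t \<in> CP G us"
proof -
  obtain u1 r1 where e1: "us = u1 # r1" using us(2) by (cases us) auto
  obtain u2 r2 where e2: "r1 = u2 # r2" using us(2) e1 by (cases r1) auto
  obtain u3 r3 where e3: "r2 = u3 # r3" using us(2) e1 e2 by (cases r2) auto
  have "r3 = []" using us(2) e1 e2 e3 by simp
  hence e: "us = [u1, u2, u3]" using e1 e2 e3 by simp
  have u: "u1 \<in> carrier G" "u2 \<in> carrier G" "u3 \<in> carrier G" "u1 \<noteq> \<one>" "u2 \<noteq> \<one>" "u3 \<noteq> \<one>"
    using us e by auto
  obtain x y z where xyz: "x \<in> carrier G" "y \<in> carrier G" "z \<in> carrier G"
      "t = inv x \<otimes> u1 \<otimes> x \<otimes> inv y \<otimes> u2 \<otimes> y \<otimes> inv z \<otimes> u3 \<otimes> z"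
    using s3[unfolded S3_def, rule_format, OF u(1) u(2) u(3) t(1) u(4) u(5) u(6) t(2)] by blast
  have "inv z \<otimes> u3 \<otimes> z \<otimes> \<one> \<in> CP G [u3]" using xyz CP_mem[of z \<one> "[]" u3] by simp
  hence "inv y \<otimes> u2 \<otimes> y \<otimes> (inv z \<otimes> u3 \<otimes> z \<otimes> \<one>) \<in> CP G [u2, u3]" using xyz CP_mem by blast
  hence "inv x \<otimes> u1 \<otimes> x \<otimes> (inv y \<otimes> u2 \<otimes> y \<otimes> (inv z \<otimes> u3 \<otimes> z \<otimes> \<one>)) \<in> CP G [u1, u2, u3]"
    using xyz CP_mem by blast
  moreover have "inv x \<otimes> u1 \<otimes> x \<otimes> (inv y \<otimes> u2 \<otimes> y \<otimes> (inv z \<otimes> u3 \<otimes> z \<otimes> \<one>)) = t"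
    using xyz u by (simp add: m_assoc)
  ultimately show ?thesis using e by simp
qed

lemma CP_one:
  assumes s1: "S1 G" and s3: "S3 G" and us: "set us \<subseteq> carrier G - {\<one>}" "length us \<ge> 4"
  shows "\<one> \<in> CP G us"
proof -
  let ?a = "take 3 us" and ?b = "drop 3 us"
  have sa: "set ?a \<subseteq> carrier G - {\<one>}" "set ?b \<subseteq> carrier G - {\<one>}"
    using us(1) set_take_subset set_drop_subset by fastforce+
  have "?b \<noteq> []" using us(2) by simp
  then obtain q where q: "q \<in> CP G ?b" "q \<noteq> \<one>" using CP_nonone[OF s1 s3 sa(2)] by auto
  have "set ?b \<subseteq> carrier G" using sa(2) by blast
  hence qc: "q \<in> carrier G" using q(1) CP_carrier by blast
  have "inv q \<in> CP G ?a"
    using CP_three[OF s3 sa(1)] us(2) qc q(2) by (simp add: inv_eq_1_iff)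
  moreover have "set ?a \<subseteq> carrier G" using sa(1) by blast
  moreover have "set ?b \<subseteq> carrier G" using sa(2) by blast
  ultimately have "inv q \<otimes> q \<in> CP G (?a @ ?b)" using CP_append q(1) by blast
  thus ?thesis using qc by simp
qed

lemma realize:
  assumes hc: "\<And>j. h j \<in> carrier G"
  shows "distinct js \<Longrightarrow> p \<in> CP G (rev (map h js)) \<Longrightarrow>
    \<exists>x. (\<forall>j. x j \<in> carrier G) \<and> foldl (\<lambda>acc j. W G h x j \<otimes> acc) \<one> js = p"
proof (induction js arbitrary: p rule: rev_induct)
  case Nil thus ?case by (intro exI[of _ "\<lambda>_. \<one>"]) auto
next
  case (snoc j js)
  from snoc.prems obtain y p' where yp: "y \<in> carrier G" "p' \<in> CP G (rev (map h js))"
    "p = inv y \<otimes> h j \<otimes> y \<otimes> p'" by auto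
  from snoc yp obtain x where x: "\<forall>j. x j \<in> carrier G"
    "foldl (\<lambda>acc j. W G h x j \<otimes> acc) \<one> js = p'" by auto
  let ?x = "x(j := y)"
  have nj: "j \<notin> set js" using snoc.prems by auto
  have "foldl (\<lambda>acc j. W G h ?x j \<otimes> acc) \<one> js = foldl (\<lambda>acc j. W G h x j \<otimes> acc) \<one> js"
    by (rule foldl_cong) (use nj in \<open>auto simp: W_def\<close>)
  hence "foldl (\<lambda>acc j. W G h ?x j \<otimes> acc) \<one> (js @ [j]) = p"
    using x yp by (simp add: W_def)
  moreover have "\<forall>j. ?x j \<in> carrier G" using x yp by auto
  ultimately show ?case by blast
qed

end

lemma foldl_W_carrier:
  assumes "group G" "\<And>j. h j \<in> carrier G" "\<And>j. x j \<in> carrier G" "a \<in> carrier G"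
  shows "foldl (\<lambda>acc j. W G h x j \<otimes>\<^bsub>G\<^esub> acc) a js \<in> carrier G"
  using assms(4)
proof (induction js arbitrary: a)
  case Nil thus ?case by simp
next
  case (Cons j js)
  have "W G h x j \<otimes>\<^bsub>G\<^esub> a \<in> carrier G"
    using assms Cons.prems by (simp add: W_def group.subgroup_self subgroup.m_closed group.inv_closed)
  thus ?case using Cons.IH by simp
qed

theorem lemma4p7:
  fixes G :: "('a, 'b) monoid_scheme" and h :: "int \<Rightarrow> 'a"
  assumes "group G" and "finite (carrier G)"
    and "S1 G" and "S2 G" and "S3 G" and "S4 G"
    and "h \<in> Hcarrier G" and "card (suppH G h) \<ge> 4"
  shows "pm_t_commutator G h"
proof -
  interpret group G by fact
  have hc: "\<And>j. h j \<in> carrier G" and fin: "finite (suppH G h)"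
    using assms(7) unfolding Hcarrier_def by auto
  have ne: "suppH G h \<noteq> {}" using assms(8) by auto
  define m where "m = Min (suppH G h)"
  define M where "M = Max (suppH G h)"
  have sub: "suppH G h \<subseteq> {m..M}" using fin ne Min_le Max_ge unfolding m_def M_def by auto
  have out: "\<And>i. i < m \<or> i > M \<Longrightarrow> h i = \<one>\<^bsub>G\<^esub>"
    using sub unfolding suppH_def by force
  let ?js = "[m..M]"
  have len: "length (filter (\<lambda>u. u \<noteq> \<one>\<^bsub>G\<^esub>) (rev (map h ?js))) = card (suppH G h)"
  proof -
    have "length (filter (\<lambda>u. u \<noteq> \<one>\<^bsub>G\<^esub>) (rev (map h ?js)))
        = length (filter (\<lambda>j. h j \<noteq> \<one>\<^bsub>G\<^esub>) ?js)"
      by (simp add: filter_map rev_filter[symmetric] comp_def)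
    also have "\<dots> = card ({j. h j \<noteq> \<one>\<^bsub>G\<^esub>} \<inter> {m..M})"
      by (simp add: distinct_length_filter)
    also have "{j. h j \<noteq> \<one>\<^bsub>G\<^esub>} \<inter> {m..M} = suppH G h" using sub unfolding suppH_def by auto
    finally show ?thesis .
  qed
  have CPfilter: "\<And>vs. set vs \<subseteq> carrier G \<Longrightarrow> CP G (filter (\<lambda>u. u \<noteq> \<one>\<^bsub>G\<^esub>) vs) \<subseteq> CP G vs"
  proof -
    fix vs :: "'a list" show "set vs \<subseteq> carrier G \<Longrightarrow> CP G (filter (\<lambda>u. u \<noteq> \<one>\<^bsub>G\<^esub>) vs) \<subseteq> CP G vs"
    proof (induction vs)
      case Nil thus ?case by simp
    next
      case (Cons v vs)
      show ?case
      proof (cases "v = \<one>\<^bsub>G\<^esub>")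
        case True
        show ?thesis
        proof
          fix p assume "p \<in> CP G (filter (\<lambda>u. u \<noteq> \<one>\<^bsub>G\<^esub>) (v # vs))"
          hence p: "p \<in> CP G vs" using True Cons by auto
          have pc: "p \<in> carrier G" using p CP_carrier Cons.prems by auto
          have "inv\<^bsub>G\<^esub> \<one>\<^bsub>G\<^esub> \<otimes>\<^bsub>G\<^esub> v \<otimes>\<^bsub>G\<^esub> \<one>\<^bsub>G\<^esub> \<otimes>\<^bsub>G\<^esub> p \<in> CP G (v # vs)" by (rule CP_mem[OF one_closed p])
          thus "p \<in> CP G (v # vs)" using True pc by simp
        qed
      next
        case False thus ?thesis using Cons by auto
      qed
    qed
  qed
  have "\<one>\<^bsub>G\<^esub> \<in> CP G (filter (\<lambda>u. u \<noteq> \<one>\<^bsub>G\<^esub>) (rev (map h ?js)))"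
    by (rule CP_one[OF assms(3) assms(5)]) (use len assms(8) hc in auto)
  hence "\<one>\<^bsub>G\<^esub> \<in> CP G (rev (map h ?js))" using CPfilter[of "rev (map h ?js)"] hc by auto
  then obtain x0 where x0: "\<forall>j. x0 j \<in> carrier G"
    "foldl (\<lambda>acc j. W G h x0 j \<otimes>\<^bsub>G\<^esub> acc) \<one>\<^bsub>G\<^esub> ?js = \<one>\<^bsub>G\<^esub>"
    using realize[where h=h and js="[m..M]" and p="\<one>\<^bsub>G\<^esub>"] hc by auto
  define x where "x j = (if h j = \<one>\<^bsub>G\<^esub> then \<one>\<^bsub>G\<^esub> else x0 j)" for j
  have xc: "\<And>j. x j \<in> carrier G" using x0 unfolding x_def by auto
  have Wx: "\<And>j. W G h x j = W G h x0 j" unfolding W_def x_def using x0 by auto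
  have W1: "\<And>j. h j = \<one>\<^bsub>G\<^esub> \<Longrightarrow> W G h x j = \<one>\<^bsub>G\<^esub>" unfolding W_def x_def by simp
  define D where "D i = foldl (\<lambda>acc j. W G h x j \<otimes>\<^bsub>G\<^esub> acc) \<one>\<^bsub>G\<^esub> [m..i - 1]" for i
  have Dc: "\<And>i. D i \<in> carrier G" unfolding D_def
    by (rule foldl_W_carrier[OF assms(1) hc xc]) simp
  have Wc: "\<And>j. W G h x j \<in> carrier G" using xc hc unfolding W_def by simp
  have Dle: "\<And>i. i \<le> m \<Longrightarrow> D i = \<one>\<^bsub>G\<^esub>" unfolding D_def by simp
  have Dstep: "\<And>i. D (i + 1) = W G h x i \<otimes>\<^bsub>G\<^esub> D i"
  proof -
    fix i show "D (i + 1) = W G h x i \<otimes>\<^bsub>G\<^esub> D i"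
    proof (cases "i \<ge> m")
      case True
      hence "[m..i] = [m..i - 1] @ [i]" by (simp add: upto_rec2)
      thus ?thesis unfolding D_def by simp
    next
      case False
      thus ?thesis using Dle W1 out Wc by simp
    qed
  qed
  have DM: "D (M + 1) = \<one>\<^bsub>G\<^esub>"
  proof -
    have "D (M + 1) = foldl (\<lambda>acc j. W G h x0 j \<otimes>\<^bsub>G\<^esub> acc) \<one>\<^bsub>G\<^esub> ?js"
      unfolding D_def using Wx by simp
    thus ?thesis using x0 by simp
  qed
  have Dgt: "\<And>i. i \<ge> M + 1 \<Longrightarrow> D i = \<one>\<^bsub>G\<^esub>"
  proof -
    fix i :: int assume "i \<ge> M + 1"
    thus "D i = \<one>\<^bsub>G\<^esub>"
    proof (induction i rule: int_ge_induct)
      case base thus ?case by (rule DM)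
    next
      case (step i) thus ?case using Dstep[of i] W1 out by simp
    qed
  qed
  define g2 where "g2 i = x i \<otimes>\<^bsub>G\<^esub> D i" for i
  have g1H: "x \<in> Hcarrier G"
  proof -
    have "suppH G x \<subseteq> suppH G h" unfolding suppH_def x_def by auto
    thus ?thesis unfolding Hcarrier_def using xc fin finite_subset by auto
  qed
  have g2H: "g2 \<in> Hcarrier G"
  proof -
    have "suppH G g2 \<subseteq> {m..M+1}"
    proof
      fix i assume "i \<in> suppH G g2"
      hence ne1: "g2 i \<noteq> \<one>\<^bsub>G\<^esub>" unfolding suppH_def by auto
      show "i \<in> {m..M+1}"
      proof (rule ccontr)
        assume "i \<notin> {m..M+1}"
        hence "i < m \<or> i > M + 1" by auto
        hence "h i = \<one>\<^bsub>G\<^esub> \<and> D i = \<one>\<^bsub>G\<^esub>" using out Dle Dgt by auto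
        hence "g2 i = \<one>\<^bsub>G\<^esub>" unfolding g2_def x_def by simp
        thus False using ne1 by simp
      qed
    qed
    moreover have "\<And>i. g2 i \<in> carrier G" unfolding g2_def using xc Dc by simp
    ultimately show ?thesis unfolding Hcarrier_def using finite_subset by auto
  qed
  have eq: "h = Hmul G (Hmul G (Hmul G x (shift (Hinv G x))) (shift g2)) (Hinv G g2)"
  proof
    fix i
    have e: "D (i + 1) = inv\<^bsub>G\<^esub> (x i) \<otimes>\<^bsub>G\<^esub> h i \<otimes>\<^bsub>G\<^esub> x i \<otimes>\<^bsub>G\<^esub> D i" using Dstep unfolding W_def by simp
    have "x i \<otimes>\<^bsub>G\<^esub> inv\<^bsub>G\<^esub> (x (i + 1)) \<otimes>\<^bsub>G\<^esub> (x (i + 1) \<otimes>\<^bsub>G\<^esub> D (i + 1)) \<otimes>\<^bsub>G\<^esub> inv\<^bsub>G\<^esub> (x i \<otimes>\<^bsub>G\<^esub> D i)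
        = x i \<otimes>\<^bsub>G\<^esub> D (i + 1) \<otimes>\<^bsub>G\<^esub> inv\<^bsub>G\<^esub> (D i) \<otimes>\<^bsub>G\<^esub> inv\<^bsub>G\<^esub> (x i)"
      using xc Dc by (simp add: m_assoc inv_mult_group inv_cancel_assoc)
    also have "\<dots> = h i" using xc Dc hc e by (simp add: m_assoc inv_cancel_assoc2)
    finally show "h i = Hmul G (Hmul G (Hmul G x (shift (Hinv G x))) (shift g2)) (Hinv G g2) i"
      unfolding Hmul_def Hinv_def shift_def g2_def by simp
  qed
  show ?thesis unfolding pm_t_commutator_def using g1H g2H eq by blast
qed

end
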